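(* Let $n\ge1$ and suppose $1\le p\le q<\infty$ and $\alpha\in\mathbb{R}$, with $\alpha\le0$ if $p=q$. Then for every cube $Q_0\subset\mathbb{R}^n$, $SR_{p,q}\log^\alpha(Q_0)=M_{n(\frac1p-\frac1q),\alpha,Q_0}L^q(Q_0)$; more precisely, $\|f\|_{SR_{p,q}\log^\alpha(Q_0)}\approx\|M_{n(\frac1p-\frac1q),\alpha,Q_0}f\|_{L^q(Q_0)}$, with constants independent of $f$ and $Q_0$.
   Context: Cubes have sides parallel to the axes; $\mathcal{D}(Q_0)$ is the family of dyadic subcubes of $Q_0$. A countable $(Q_i)_{i\in I}\subset\mathcal{D}(Q_0)$ is sparse if there exist pairwise disjoint measurable $E_{Q_i}\subseteq Q_i$ with $|E_{Q_i}|\ge\frac12|Q_i|$; $S(Q_0)$ is the set of sparse families. $(a)_-=\min\{a,0\}$, $\log$ is the natural logarithm, $p'$ is the dual exponent. $SR_{p,q}\log^\alpha(Q_0)$ is the set of $f\in L^1(Q_0)$ with $\|f\|_{SR_{p,q}\log^\alpha(Q_0)}=\sup_{(Q_i)\in S(Q_0)}\big\{\sum_i\big[(1-(\log|Q_i|)_-)^\alpha|Q_i|^{-1/p'}\int_{Q_i}|f|\big]^q\big\}^{1/q}<\infty$. For $0\le\lambda<n$, $M_{\lambda,\alpha,Q_0}f(x)=\sup_{Q\in\mathcal{D}(Q_0),\,x\in Q}|Q|^{\frac\lambda n-1}(1-(\log|Q|)_-)^\alpha\int_Q|f|$, $x\in Q_0$, and $M_{\lambda,\alpha,Q_0}L^q(Q_0)=\{f\in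 L^1(Q_0):M_{\lambda,\alpha,Q_0}f\in L^q(Q_0)\}$. *)

theory Defs
  imports "HOL-Analysis.Analysis"
begin

text \<open>Real powers on extended nonnegative reals (used with positive exponents):
  \<open>\<infinity>\<close> stays \<open>\<infinity>\<close>.\<close>
definition enn_powr :: "ennreal \<Rightarrow> real \<Rightarrow> ennreal" where
  "enn_powr x r = (if x = top then top else ennreal (enn2real x powr r))"

definition cube :: "real^'n \<Rightarrow> real \<Rightarrow> (real^'n) set" where
  "cube c s = {x. \<forall>i. c$i \<le> x$i \<and> x$i \<le> c$i + s}"

definition dyadic :: "real^'n \<Rightarrow> real \<Rightarrow> (real^'n) set set" where
  "dyadic a l = {cube (a + (l / 2^k) *\<^sub>R (\<chi> i. real (j i))) (l / 2^k) | k j.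
                   \<forall>i. j i < 2^k}"

definition sparse :: "real^'n \<Rightarrow> real \<Rightarrow> (real^'n) set set set" where
  "sparse a l = {S. S \<subseteq> dyadic a l \<and> countable S \<and>
     (\<exists>E. (\<forall>Q\<in>S. E Q \<in> sets lebesgue \<and> E Q \<subseteq> Q \<and> measure lebesgue (E Q) \<ge> measure lebesgue Q / 2)
        \<and> (\<forall>Q\<in>S. \<forall>Q'\<in>S. Q \<noteq> Q' \<longrightarrow> E Q \<inter> E Q' = {}))}"

definition logw :: "real \<Rightarrow> (real^'n) set \<Rightarrow> real" where
  "logw \<alpha> Q = (1 - min (ln (measure lebesgue Q)) 0) powr \<alpha>"

definition SR_norm :: "real \<Rightarrow> real \<Rightarrow> real \<Rightarrow> real^'n \<Rightarrow> real \<Rightarrow> (real^'n \<Rightarrow> real) \<Rightarrow> ennreal" where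
  "SR_norm p q \<alpha> a l f =
     enn_powr (SUP S \<in> sparse a l.
        (\<integral>\<^sup>+ Q. enn_powr (ennreal (logw \<alpha> Q * measure lebesgue Q powr (1/p - 1))
                  * (\<integral>\<^sup>+ x\<in>Q. ennreal \<bar>f x\<bar> \<partial>lebesgue)) q \<partial>count_space S)) (1/q)"

definition SR_space :: "real \<Rightarrow> real \<Rightarrow> real \<Rightarrow> real^'n \<Rightarrow> real \<Rightarrow> (real^'n \<Rightarrow> real) set" where
  "SR_space p q \<alpha> a l = {f. set_integrable lebesgue (cube a l) f \<and> SR_norm p q \<alpha> a l f < \<infinity>}"

definition Mmax :: "real \<Rightarrow> real \<Rightarrow> real^'n \<Rightarrow> real \<Rightarrow> (real^'n \<Rightarrow> real) \<Rightarrow> real^'n \<Rightarrow> ennreal" where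
  "Mmax lam \<alpha> a l f x = (SUP Q \<in> {Q \<in> dyadic a l. x \<in> Q}.
      ennreal (measure lebesgue Q powr (lam / real CARD('n) - 1) * logw \<alpha> Q)
        * (\<integral>\<^sup>+ y\<in>Q. ennreal \<bar>f y\<bar> \<partial>lebesgue))"

definition M_Lq_norm :: "real \<Rightarrow> real \<Rightarrow> real \<Rightarrow> real^'n \<Rightarrow> real \<Rightarrow> (real^'n \<Rightarrow> real) \<Rightarrow> ennreal" where
  "M_Lq_norm lam \<alpha> q a l f =
     enn_powr (\<integral>\<^sup>+ x\<in>cube a l. enn_powr (Mmax lam \<alpha> a l f x) q \<partial>lebesgue) (1/q)"

definition M_Lq_space :: "real \<Rightarrow> real \<Rightarrow> real \<Rightarrow> real^'n \<Rightarrow> real \<Rightarrow> (real^'n \<Rightarrow> real) set" where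
  "M_Lq_space lam \<alpha> q a l = {f. set_integrable lebesgue (cube a l) f \<and>
      Mmax lam \<alpha> a l f \<in> borel_measurable (lebesgue_on (cube a l)) \<and>
      M_Lq_norm lam \<alpha> q a l f < \<infinity>}"

end

theory Submission
  imports Defs
begin
definition hcube :: "real^'n \<Rightarrow> real \<Rightarrow> (real^'n) set" where
  "hcube c s = {x. \<forall>i. c$i \<le> x$i \<and> x$i < c$i + s}"

definition HQ :: "(real^'n) set \<Rightarrow> (real^'n) set" where
  "HQ Q = {x\<in>Q. \<forall>i. x$i < Sup ((\<lambda>y. y$i) ` Q)}"

definition upc :: "real^'n \<Rightarrow> real \<Rightarrow> real^'n" where
  "upc c s = (\<chi> i. c$i + s)"

lemma cube_cbox: "cube c s = cbox c (upc c s)"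
  by (auto simp: cube_def mem_box_cart upc_def)

lemma box_sub_hcube: "box c (upc c s) \<subseteq> hcube c s"
  by (auto simp: hcube_def mem_box_cart upc_def) (meson less_imp_le)

lemma hcube_sub_cube: "hcube c s \<subseteq> cube c s"
  by (auto simp: hcube_def cube_def) (meson less_imp_le)

lemma HQ_cube: assumes "0 \<le> s" shows "HQ (cube c s) = hcube c s"
proof -
  have "Sup ((\<lambda>y. y$i) ` cube c s) = c$i + s" for i
  proof (rule cSup_eq_maximum)
    show "c$i + s \<in> (\<lambda>y. y$i) ` cube c s" using assms
      by (intro image_eqI[where x="upc c s"]) (auto simp: cube_def upc_def)
    show "\<And>y. y \<in> (\<lambda>y. y$i) ` cube c s \<Longrightarrow> y \<le> c$i + s" by (auto simp: cube_def)
  qed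
  thus ?thesis by (auto simp: HQ_def hcube_def cube_def) (meson less_imp_le)
qed

lemma cube_subset_side: assumes "cube c s \<subseteq> cube c' s'" "0 \<le> s" shows "s \<le> s'"
proof -
  have "c \<in> cube c s" "upc c s \<in> cube c s" using assms(2) by (auto simp: cube_def upc_def)
  hence "c \<in> cube c' s'" "upc c s \<in> cube c' s'" using assms(1) by auto
  hence "c'$i \<le> c$i" "c$i + s \<le> c'$i + s'" for i by (auto simp: cube_def upc_def)
  thus ?thesis by (metis add_le_cancel_left add_mono order.trans le_add_diff_inverse linorder_linear)
qed

lemma sets_cube[measurable]: "cube c s \<in> sets lebesgue"
  unfolding cube_cbox by simp

lemma hcube_null: "cube c s - hcube c s \<in> null_sets lebesgue"
  unfolding null_sets_completion_iff2
proof (intro bexI[OF _ null_sets_cbox_Diff_box[of c "upc c s"]])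
  show "cube c s - hcube c s \<subseteq> cbox c (upc c s) - box c (upc c s)"
    using box_sub_hcube[of c s] unfolding cube_cbox by blast
qed

lemma sets_hcube[measurable]: "hcube c s \<in> sets lebesgue"
proof -
  have "hcube c s = cube c s - (cube c s - hcube c s)" using hcube_sub_cube by blast
  thus ?thesis using hcube_null by (metis sets.Diff null_setsD2 sets_cube)
qed

lemma emeasure_hcube: "emeasure lebesgue (hcube c s) = emeasure lebesgue (cube c s)"
proof -
  have "hcube c s = cube c s - (cube c s - hcube c s)" using hcube_sub_cube by blast
  thus ?thesis using hcube_null emeasure_Diff_null_set sets_cube by metis
qed

lemma emeasure_cube_val: fixes c :: "real^'n" assumes "0 \<le> s" shows "emeasure lebesgue (cube c s) = ennreal (s ^ CARD('n))"
proof -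
  have ne: "cbox c (upc c s) \<noteq> {}" using assms by (auto simp: interval_eq_empty_cart upc_def)
  have "emeasure lebesgue (cube c s) = ennreal (measure lebesgue (cbox c (upc c s)))"
    unfolding cube_cbox by (simp add: emeasure_eq_measure2)
  also have "measure lebesgue (cbox c (upc c s)) = measure lborel (cbox c (upc c s))" by simp
  also have "\<dots> = s ^ CARD('n)" using ne by (simp add: content_cbox_cart upc_def)
  finally show ?thesis .
qed

lemma emeasure_cube_pos: assumes "0 < s" shows "0 < emeasure lebesgue (cube c s)"
  using emeasure_cube_val[OF less_imp_le[OF assms], of c] assms by simp

lemma emeasure_cube_fin: "emeasure lebesgue (cube c s) < \<infinity>"
  unfolding cube_cbox using lmeasurable_cbox by (simp add: fmeasurable_def)

definition dq :: "real^'n \<Rightarrow> real \<Rightarrow> nat \<Rightarrow> ('n \<Rightarrow> nat) \<Rightarrow> (real^'n) set" where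
  "dq a l k j = cube (a + (l / 2^k) *\<^sub>R (\<chi> i. real (j i))) (l / 2^k)"

lemma dyadic_iff: "Q \<in> dyadic a l \<longleftrightarrow> (\<exists>k j. (\<forall>i. j i < 2^k) \<and> Q = dq a l k j)"
  by (auto simp: dyadic_def dq_def)

lemma dyadic_countable: "countable (dyadic a l)"
proof -
  have "dyadic a l \<subseteq> (\<lambda>(k,j). dq a l k j) ` UNIV"
  proof
    fix Q assume "Q \<in> dyadic a l"
    then obtain k j where "Q = dq a l k j" by (auto simp: dyadic_iff)
    thus "Q \<in> (\<lambda>(k,j). dq a l k j) ` UNIV" by (auto intro: image_eqI[where x="(k,j)"])
  qed
  thus ?thesis by (rule countable_subset) simp
qed

lemma dq_sub: assumes "0 < l" "\<forall>i. j i < 2^k" shows "dq a l k j \<subseteq> cube a l"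
proof
  fix x assume x: "x \<in> dq a l k j"
  have "a$i \<le> x$i \<and> x$i \<le> a$i + l" for i
  proof -
    have t: "0 < l / 2^k" using assms by simp
    have "j i + 1 \<le> (2::nat)^k" using assms(2) by (simp add: Suc_le_eq)
    hence "real (j i + 1) \<le> real ((2::nat)^k)" by (simp only: of_nat_le_iff)
    hence "real (j i) + 1 \<le> 2^k" by simp
    hence "l / 2^k * (real (j i) + 1) \<le> l / 2^k * 2^k" using t by (intro mult_left_mono) auto
    also have "\<dots> = l" by simp
    finally have "l / 2^k * (real (j i) + 1) \<le> l" .
    hence "l / 2^k * real (j i) + l / 2^k \<le> l" by (simp only: distrib_left mult_1_right)
    moreover have "0 \<le> l / 2^k * real (j i)" using t by (intro mult_nonneg_nonneg) auto
    moreover have "a$i + l / 2^k * real (j i) \<le> x$i \<and> x$i \<le> a$i + l / 2^k * real (j i) + l / 2^k"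
      using x by (simp add: dq_def cube_def)
    ultimately show ?thesis by linarith
  qed
  thus "x \<in> cube a l" by (simp add: cube_def)
qed

lemma nest_1d:
  fixes x A s' :: real and j j' d :: nat
  assumes "0 < s'" "A + s'*2^d*j \<le> x" "x < A + s'*2^d*j + s'*2^d" "A + s'*j' \<le> x" "x < A + s'*j' + s'"
  shows "s'*2^d*j \<le> s'*j'" and "s'*j' + s' \<le> s'*2^d*j + s'*2^d"
proof -
  have "s' * (2^d*j) < s' * (j'+1)" using assms(2,5) by (simp add: algebra_simps)
  hence "real (2^d*j) < real (j'+1)" using assms(1) by (simp add: mult_less_cancel_left_pos)
  hence "2^d*j < j'+1" by (simp only: of_nat_less_iff)
  hence "2^d*j \<le> j'" by simp
  hence "real (2^d*j) \<le> real j'" by (simp only: of_nat_le_iff)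
  thus "s'*2^d*j \<le> s'*j'" using assms(1) by (simp add: mult.assoc)
  have "s' * j' < s' * (2^d*(j+1))" using assms(3,4) by (simp add: algebra_simps)
  hence "real j' < real (2^d*(j+1))" using assms(1) by (simp add: mult_less_cancel_left_pos)
  hence "j' < 2^d*(j+1)" by (simp only: of_nat_less_iff)
  hence "real (j'+1) \<le> real (2^d*(j+1))" by (simp only: of_nat_le_iff)
  hence "s' * (j'+1) \<le> s' * (2^d*(j+1))" using assms(1) by (intro mult_left_mono) auto
  thus "s'*j' + s' \<le> s'*2^d*j + s'*2^d" by (simp add: algebra_simps)
qed

lemma HQ_dq: assumes "0 < l" shows "HQ (dq a l k j) = hcube (a + (l / 2^k) *\<^sub>R (\<chi> i. real (j i))) (l / 2^k)"
  unfolding dq_def using assms by (intro HQ_cube) simp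

lemma dq_nested:
  assumes l: "0 < l" and kk: "k \<le> k'" and x: "x \<in> HQ (dq a l k j)" "x \<in> HQ (dq a l k' j')"
  shows "dq a l k' j' \<subseteq> dq a l k j"
proof
  define d where "d = k' - k"
  define s' where "s' = l / 2^k'"
  have s'pos: "0 < s'" using l by (simp add: s'_def)
  have ss: "l / 2^k = s' * 2^d"
  proof -
    have "(2::real)^k' = 2^k * 2^d" using kk by (simp add: d_def flip: power_add)
    thus ?thesis by (simp add: s'_def field_simps)
  qed
  fix y assume y: "y \<in> dq a l k' j'"
  have "a$i + l/2^k * j i \<le> y$i \<and> y$i \<le> a$i + l/2^k * j i + l/2^k" for i
  proof -
    have x1: "a$i + s'*2^d*j i \<le> x$i" "x$i < a$i + s'*2^d*j i + s'*2^d"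
      using x(1) l unfolding HQ_dq[OF l] hcube_def ss by (auto simp: mult.commute mult.left_commute)
    have x2: "a$i + s'*j' i \<le> x$i" "x$i < a$i + s'*j' i + s'"
      using x(2) l unfolding HQ_dq[OF l] hcube_def s'_def by (auto simp: mult.commute)
    note n = nest_1d[OF s'pos x1 x2]
    have "a$i + s'*j' i \<le> y$i" "y$i \<le> a$i + s'*j' i + s'"
      using y unfolding dq_def cube_def s'_def by (auto simp: mult.commute)
    thus ?thesis using n unfolding ss by (auto simp: mult.commute mult.left_commute)
  qed
  thus "y \<in> dq a l k j" by (simp add: dq_def cube_def mult.commute)
qed

lemma finite_bounded_funs: "finite {j :: 'n::finite \<Rightarrow> nat. \<forall>i. j i < N}"
proof -
  have "{j :: 'n \<Rightarrow> nat. \<forall>i. j i < N} = PiE UNIV (\<lambda>_. {..<N})"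
    by (auto simp: PiE_UNIV_domain Pi_def)
  thus ?thesis by (simp add: finite_PiE)
qed

lemma dq_anc_finite: assumes l: "0 < l" shows "finite {Q'\<in>dyadic a l. dq a l k j \<subseteq> Q'}"
proof (rule finite_subset)
  show "{Q'\<in>dyadic a l. dq a l k j \<subseteq> Q'} \<subseteq> (\<lambda>(k',j'). dq a l k' j') ` ({..k} \<times> {j'. \<forall>i. j' i < 2^k})"
  proof
    fix Q' assume "Q' \<in> {Q'\<in>dyadic a l. dq a l k j \<subseteq> Q'}"
    then obtain k' j' where Q': "\<forall>i. j' i < 2^k'" "Q' = dq a l k' j'" "dq a l k j \<subseteq> dq a l k' j'"
      by (auto simp: dyadic_iff)
    have "l / 2^k \<le> l / 2^k'" using cube_subset_side[OF Q'(3)[unfolded dq_def]] l by simp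
    have "k' \<le> k"
    proof (rule ccontr)
      assume "\<not> k' \<le> k"
      hence "(2::real)^k < 2^k'" by simp
      hence "l / 2^k' < l / 2^k" using l by (intro divide_strict_left_mono) auto
      with \<open>l / 2^k \<le> l / 2^k'\<close> show False by simp
    qed
    hence "\<forall>i. j' i < 2^k" using Q'(1) by (meson order_less_le_trans one_le_numeral power_increasing)
    thus "Q' \<in> (\<lambda>(k',j'). dq a l k' j') ` ({..k} \<times> {j'. \<forall>i. j' i < 2^k})"
      using Q' \<open>k' \<le> k\<close> by force
  qed
  show "finite ((\<lambda>(k',j'). dq a l k' j') ` ({..k} \<times> {j'. \<forall>i. j' i < 2^k}))"
    using finite_bounded_funs by auto
qed

lemma exists_maximal:
  assumes l: "0 < l" and Q: "Q \<in> dyadic a l" and P: "P Q"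
  shows "\<exists>M\<in>dyadic a l. Q \<subseteq> M \<and> P M \<and> (\<forall>Q'\<in>dyadic a l. M \<subseteq> Q' \<and> P Q' \<longrightarrow> Q' = M)"
proof -
  define A where "A = {Q'\<in>dyadic a l. Q \<subseteq> Q' \<and> P Q'}"
  obtain k j where "Q = dq a l k j" using Q by (auto simp: dyadic_iff)
  hence "finite A" unfolding A_def by (intro finite_subset[OF _ dq_anc_finite[OF l, of a k j]]) auto
  moreover have "A \<noteq> {}" using Q P by (auto simp: A_def)
  ultimately obtain m where m: "m \<in> A" "\<forall>b\<in>A. m \<le> b \<longrightarrow> m = b" using finite_has_maximal by blast
  show ?thesis
  proof (intro bexI[of _ m] conjI ballI impI)
    fix Q' assume "Q' \<in> dyadic a l" "m \<subseteq> Q' \<and> P Q'"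
    thus "Q' = m" using m by (auto simp: A_def)
  qed (use m in \<open>auto simp: A_def\<close>)
qed

lemma dyadic_HQ_nested:
  assumes l: "0 < l" and Q: "Q \<in> dyadic a l" "Q' \<in> dyadic a l" and x: "x \<in> HQ Q" "x \<in> HQ Q'"
  shows "Q \<subseteq> Q' \<or> Q' \<subseteq> Q"
proof -
  obtain k j k' j' where "Q = dq a l k j" "Q' = dq a l k' j'" using Q by (auto simp: dyadic_iff)
  thus ?thesis using dq_nested[OF l, of k k' x a j j'] dq_nested[OF l, of k' k x a j' j] x
    by (cases "k \<le> k'") auto
qed

lemma dyadic_props:
  assumes l: "0 < l" and Q: "Q \<in> dyadic a l"
  shows "Q \<subseteq> cube a l" "Q \<in> sets lebesgue" "HQ Q \<in> sets lebesgue" "HQ Q \<subseteq> Q"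
    "emeasure lebesgue (HQ Q) = emeasure lebesgue Q" "0 < emeasure lebesgue Q" "emeasure lebesgue Q < \<infinity>"
proof -
  obtain k j where kj: "\<forall>i. j i < 2^k" "Q = dq a l k j" using Q by (auto simp: dyadic_iff)
  show "Q \<subseteq> cube a l" using dq_sub[OF l kj(1)] kj(2) by simp
  show "Q \<in> sets lebesgue" unfolding kj dq_def by simp
  show "HQ Q \<in> sets lebesgue" unfolding kj HQ_dq[OF l] by simp
  show "HQ Q \<subseteq> Q" unfolding kj HQ_dq[OF l] unfolding dq_def by (rule hcube_sub_cube)
  show "emeasure lebesgue (HQ Q) = emeasure lebesgue Q" unfolding kj HQ_dq[OF l] unfolding dq_def by (rule emeasure_hcube)
  show "0 < emeasure lebesgue Q" unfolding kj dq_def using l by (intro emeasure_cube_pos) simp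
  show "emeasure lebesgue Q < \<infinity>" unfolding kj dq_def by (rule emeasure_cube_fin)
qed

lemma enn_powr_top[simp]: "enn_powr top r = top" by (simp add: enn_powr_def)
lemma enn_powr_ennreal: "0 \<le> x \<Longrightarrow> enn_powr (ennreal x) r = ennreal (x powr r)" by (simp add: enn_powr_def)
lemma enn_powr_zero[simp]: "enn_powr 0 r = 0" by (simp add: enn_powr_def)

lemma enn_powr_mono: assumes "x \<le> y" "0 \<le> r" shows "enn_powr x r \<le> enn_powr y r"
proof (cases "y = top")
  case True thus ?thesis by (simp add: enn_powr_def)
next
  case False
  then obtain y' where y: "y = ennreal y'" "0 \<le> y'" by (cases y) auto
  moreover have "x \<noteq> top" using assms(1) False top_unique by auto
  then obtain x' where x: "x = ennreal x'" "0 \<le> x'" by (cases x) auto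
  ultimately have "x' \<le> y'" using assms(1) by (simp add: ennreal_le_iff)
  thus ?thesis using x y assms(2) by (simp add: enn_powr_ennreal powr_mono2)
qed

lemma enn_powr_cmult: assumes "0 < c" shows "enn_powr (ennreal c * x) r = ennreal (c powr r) * enn_powr x r"
proof (cases "x = top")
  case True thus ?thesis using assms by (simp add: ennreal_mult_top)
next
  case False
  then obtain x' where x: "x = ennreal x'" "0 \<le> x'" by (cases x) auto
  have e1: "ennreal c * x = ennreal (c * x')" using x assms by (simp add: ennreal_mult)
  have "enn_powr (ennreal c * x) r = ennreal ((c*x') powr r)" unfolding e1 using x assms by (simp add: enn_powr_ennreal)
  also have "\<dots> = ennreal (c powr r) * ennreal (x' powr r)" using x assms by (simp add: powr_mult ennreal_mult)
  also have "ennreal (x' powr r) = enn_powr x r" using x by (simp add: enn_powr_ennreal)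
  finally show ?thesis .
qed

lemma enn_powr_inv: assumes "0 < q" shows "enn_powr (enn_powr x q) (1/q) = x"
proof (cases "x = top")
  case True thus ?thesis by simp
next
  case False
  then obtain x' where x: "x = ennreal x'" "0 \<le> x'" by (cases x) auto
  thus ?thesis using assms by (simp add: enn_powr_ennreal powr_powr)
qed

lemma enn_powr_meas[measurable (raw)]:
  assumes "f \<in> borel_measurable M" shows "(\<lambda>x. enn_powr (f x) r) \<in> borel_measurable M"
  unfolding enn_powr_def using assms by measurable

definition Mb :: "real^'n \<Rightarrow> real \<Rightarrow> ((real^'n) set \<Rightarrow> ennreal) \<Rightarrow> real^'n \<Rightarrow> ennreal" where
  "Mb a l g x = (SUP Q\<in>{Q\<in>dyadic a l. x\<in>Q}. g Q)"

lemma Mmax_Mb: fixes a :: "real^'n" and f :: "real^'n \<Rightarrow> real" shows "Mmax lam \<alpha> a l f = Mb a l (\<lambda>Q. ennreal (measure lebesgue Q powr (lam / real CARD('n) - 1) * logw \<alpha> Q) * (\<integral>\<^sup>+ y\<in>Q. ennreal \<bar>f y\<bar> \<partial>lebesgue))"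
  by (simp add: Mmax_def Mb_def fun_eq_iff)

lemma Mb_upper: "Q \<in> dyadic a l \<Longrightarrow> x \<in> Q \<Longrightarrow> g Q \<le> Mb a l g x"
  unfolding Mb_def by (rule SUP_upper) auto

lemma Mb_alt: "Mb a l g x = (SUP Q\<in>dyadic a l. g Q * indicator Q x)"
proof (rule antisym)
  show "Mb a l g x \<le> (SUP Q\<in>dyadic a l. g Q * indicator Q x)"
    unfolding Mb_def by (rule SUP_least) (auto intro: SUP_upper2)
  show "(SUP Q\<in>dyadic a l. g Q * indicator Q x) \<le> Mb a l g x"
    by (rule SUP_least) (auto simp: indicator_def intro: Mb_upper)
qed

lemma Mb_meas: assumes l: "0 < l" shows "Mb a l g \<in> borel_measurable lebesgue"
proof -
  have "(\<lambda>x. SUP Q\<in>dyadic a l. g Q * indicator Q x) \<in> borel_measurable lebesgue"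
  proof (rule borel_measurable_SUP[OF dyadic_countable])
    fix Q assume "Q \<in> dyadic a l"
    hence [measurable]: "Q \<in> sets lebesgue" using dyadic_props(2)[OF l] by blast
    show "(\<lambda>x. g Q * indicator Q x) \<in> borel_measurable lebesgue" by measurable
  qed
  thus ?thesis by (simp add: Mb_alt[abs_def])
qed

lemma dirA:
  assumes l: "0 < l" and q: "0 < q" and S: "S \<in> sparse a l"
  shows "(\<integral>\<^sup>+Q. enn_powr (g Q) q * emeasure lebesgue Q \<partial>count_space S)
           \<le> 2 * (\<integral>\<^sup>+x\<in>cube a l. enn_powr (Mb a l g x) q \<partial>lebesgue)"
proof -
  have P: "S \<subseteq> dyadic a l \<and> countable S \<and> (\<exists>E. (\<forall>Q\<in>S. E Q \<in> sets lebesgue \<and> E Q \<subseteq> Q \<and> measure lebesgue (E Q) \<ge> measure lebesgue Q / 2)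
        \<and> (\<forall>Q\<in>S. \<forall>Q'\<in>S. Q \<noteq> Q' \<longrightarrow> E Q \<inter> E Q' = {}))"
    using S unfolding sparse_def by simp
  have SD: "S \<subseteq> dyadic a l" using P by (rule conjunct1)
  have cS: "countable S" using P by (rule conjunct1[OF conjunct2])
  have ex: "\<exists>E. (\<forall>Q\<in>S. E Q \<in> sets lebesgue \<and> E Q \<subseteq> Q \<and> measure lebesgue (E Q) \<ge> measure lebesgue Q / 2)
        \<and> (\<forall>Q\<in>S. \<forall>Q'\<in>S. Q \<noteq> Q' \<longrightarrow> E Q \<inter> E Q' = {})" using P by (rule conjunct2[OF conjunct2])
  obtain E where EE: "(\<forall>Q\<in>S. E Q \<in> sets lebesgue \<and> E Q \<subseteq> Q \<and> measure lebesgue (E Q) \<ge> measure lebesgue Q / 2)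
        \<and> (\<forall>Q\<in>S. \<forall>Q'\<in>S. Q \<noteq> Q' \<longrightarrow> E Q \<inter> E Q' = {})" using ex by (elim exE)
  have E: "\<And>Q. Q\<in>S \<Longrightarrow> E Q \<in> sets lebesgue \<and> E Q \<subseteq> Q \<and> measure lebesgue (E Q) \<ge> measure lebesgue Q / 2"
    using EE by (elim conjE) simp
  have Ed: "\<And>Q Q'. Q\<in>S \<Longrightarrow> Q'\<in>S \<Longrightarrow> Q \<noteq> Q' \<Longrightarrow> E Q \<inter> E Q' = {}"
    using EE by (elim conjE) simp
  define F where "F x = enn_powr (Mb a l g x) q" for x
  have Fm[measurable]: "F \<in> borel_measurable lebesgue" unfolding F_def using Mb_meas[OF l] by measurable
  have Em[measurable]: "Q \<in> S \<Longrightarrow> E Q \<in> sets lebesgue" for Q using E by blast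
  have step: "enn_powr (g Q) q * emeasure lebesgue Q \<le> 2 * (\<integral>\<^sup>+x. F x * indicator (E Q) x \<partial>lebesgue)"
    if Q: "Q \<in> S" for Q
  proof -
    have QD: "Q \<in> dyadic a l" using Q SD by blast
    have fin: "emeasure lebesgue Q \<noteq> top" using dyadic_props(7)[OF l QD] by simp
    have fin2: "emeasure lebesgue (E Q) \<noteq> top"
      using E[OF Q] fin emeasure_mono[of "E Q" Q lebesgue] dyadic_props(2)[OF l QD]
      by (metis infinity_ennreal_def top.extremum_uniqueI)
    have "emeasure lebesgue Q = ennreal (measure lebesgue Q)" using fin by (simp add: emeasure_eq_ennreal_measure)
    also have "\<dots> \<le> ennreal (2 * measure lebesgue (E Q))" using E[OF Q] by (intro ennreal_leI) simp
    also have "\<dots> = 2 * emeasure lebesgue (E Q)" using fin2 by (simp add: emeasure_eq_ennreal_measure ennreal_mult)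
    finally have m: "emeasure lebesgue Q \<le> 2 * emeasure lebesgue (E Q)" .
    have "enn_powr (g Q) q * emeasure lebesgue Q \<le> enn_powr (g Q) q * (2 * emeasure lebesgue (E Q))"
      by (intro mult_left_mono m) simp
    also have "\<dots> = 2 * (\<integral>\<^sup>+x. enn_powr (g Q) q * indicator (E Q) x \<partial>lebesgue)"
      using Q by (simp add: nn_integral_cmult_indicator mult.commute mult.left_commute)
    also have "\<dots> \<le> 2 * (\<integral>\<^sup>+x. F x * indicator (E Q) x \<partial>lebesgue)"
    proof (intro mult_left_mono nn_integral_mono)
      fix x show "enn_powr (g Q) q * indicator (E Q) x \<le> F x * indicator (E Q) x"
        using E[OF Q] QD q unfolding F_def
        by (cases "x \<in> E Q") (auto intro!: enn_powr_mono Mb_upper)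
    qed simp
    finally show ?thesis .
  qed
  have pt: "(\<integral>\<^sup>+Q. F x * indicator (E Q) x \<partial>count_space S) \<le> F x * indicator (cube a l) x" for x
  proof (cases "\<exists>Q1\<in>S. x \<in> E Q1")
    case True
    then obtain Q1 where Q1: "Q1 \<in> S" "x \<in> E Q1" by blast
    have "(\<integral>\<^sup>+Q. F x * indicator (E Q) x \<partial>count_space S) = (\<integral>\<^sup>+Q. F x * indicator {Q1} Q \<partial>count_space S)"
      using Q1 Ed by (intro nn_integral_cong) (auto simp: indicator_def)
    also have "\<dots> = F x" using Q1 by (simp add: nn_integral_cmult_indicator)
    also have "\<dots> = F x * indicator (cube a l) x"
      using Q1 E[OF Q1(1)] dyadic_props(1)[OF l, of Q1 a] SD by (auto simp: indicator_def)
    finally show ?thesis by simp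
  next
    case False
    hence "(\<integral>\<^sup>+Q. F x * indicator (E Q) x \<partial>count_space S) = (\<integral>\<^sup>+Q. 0 \<partial>count_space S)"
      by (intro nn_integral_cong) (auto simp: indicator_def)
    thus ?thesis by simp
  qed
  have "(\<integral>\<^sup>+Q. enn_powr (g Q) q * emeasure lebesgue Q \<partial>count_space S)
      \<le> (\<integral>\<^sup>+Q. 2 * (\<integral>\<^sup>+x. F x * indicator (E Q) x \<partial>lebesgue) \<partial>count_space S)"
    using step by (intro nn_integral_mono) auto
  also have "\<dots> = 2 * (\<integral>\<^sup>+Q. (\<integral>\<^sup>+x. F x * indicator (E Q) x \<partial>lebesgue) \<partial>count_space S)"
    by (simp add: nn_integral_cmult)
  also have "(\<integral>\<^sup>+Q. (\<integral>\<^sup>+x. F x * indicator (E Q) x \<partial>lebesgue) \<partial>count_space S)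
      = (\<integral>\<^sup>+x. (\<integral>\<^sup>+Q. F x * indicator (E Q) x \<partial>count_space S) \<partial>lebesgue)"
    by (rule nn_integral_count_space_nn_integral[symmetric, OF cS]) measurable
  also have "\<dots> \<le> (\<integral>\<^sup>+x. F x * indicator (cube a l) x \<partial>lebesgue)"
    by (intro nn_integral_mono pt)
  finally show ?thesis by (simp add: F_def mult_left_mono)
qed

lemma ennreal_le_suminf: "(f i :: ennreal) \<le> suminf f"
proof (rule ccontr)
  assume "\<not> f i \<le> suminf f"
  hence "suminf f < f i" by simp
  thus False using ennreal_suminf_lessD by blast
qed

lemma ennreal_suminf_shift: assumes "(f 0 :: ennreal) = 0" shows "suminf f = (\<Sum>n. f (Suc n))"
proof -
  have eq: "(\<lambda>n. sum f {..<Suc n}) = (\<lambda>n. \<Sum>i<n. f (Suc i))" by (rule ext) (simp only: sum.lessThan_Suc_shift assms add_0_left)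
  have "(\<lambda>n. \<Sum>i<n. f (Suc i)) \<longlonglongrightarrow> (\<Sum>n. f (Suc n))"
    using summable_sums[OF summableI] unfolding sums_def .
  hence "(\<lambda>n. sum f {..<Suc n}) \<longlonglongrightarrow> (\<Sum>n. f (Suc n))" unfolding eq .
  hence "f sums (\<Sum>n. f (Suc n))" unfolding sums_def by (rule LIMSEQ_imp_Suc)
  thus ?thesis by (rule sums_unique[symmetric])
qed

lemma ennreal_half_absorb:
  assumes "(T::ennreal) \<noteq> top" "T \<le> G + ennreal (1/2) * T" shows "T \<le> 2 * G"
proof (cases "G = top")
  case True thus ?thesis by (simp add: ennreal_mult_top)
next
  case False
  obtain t where t: "T = ennreal t" "0 \<le> t" using assms(1) by (cases T) auto
  obtain g where g: "G = ennreal g" "0 \<le> g" using False by (cases G) auto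
  have "ennreal (1/2) * T = ennreal (t/2)" unfolding t(1) by (subst ennreal_mult[symmetric]) (use t in auto)
  moreover have "ennreal g + ennreal (t/2) = ennreal (g + t/2)" using t g by (intro ennreal_plus[symmetric]) auto
  ultimately have tt: "ennreal t \<le> ennreal (g + t/2)" using assms(2) t g by simp
  have "t \<le> g + t/2" using tt by (rule ennreal_le_iff[THEN iffD1, rotated]) (use t g in simp)
  hence "t \<le> 2 * g" by simp
  hence "ennreal t \<le> ennreal (2 * g)" by (rule ennreal_leI)
  thus ?thesis using t g by (simp add: ennreal_mult)
qed

lemma count_space_split:
  "(\<integral>\<^sup>+x. f x \<partial>count_space A) = (\<integral>\<^sup>+x. f x \<partial>count_space {x\<in>A. P x}) + (\<integral>\<^sup>+x. f x \<partial>count_space {x\<in>A. \<not> P x})"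
proof -
  have "(\<integral>\<^sup>+x. f x \<partial>count_space A) = (\<integral>\<^sup>+x. f x * indicator {x\<in>A. P x} x + f x * indicator {x\<in>A. \<not> P x} x \<partial>count_space UNIV)"
    by (subst nn_integral_count_space_indicator) (auto intro!: nn_integral_cong simp: indicator_def)
  also have "\<dots> = (\<integral>\<^sup>+x. f x * indicator {x\<in>A. P x} x \<partial>count_space UNIV) + (\<integral>\<^sup>+x. f x * indicator {x\<in>A. \<not> P x} x \<partial>count_space UNIV)"
    by (rule nn_integral_add) auto
  finally show ?thesis by (simp add: nn_integral_count_space_indicator)
qed

lemma count_space_subset_ind: assumes "A \<subseteq> B"
  shows "(\<integral>\<^sup>+x. f x \<partial>count_space A) = (\<integral>\<^sup>+x. f x * indicator A x \<partial>count_space B)"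
proof -
  have "(\<integral>\<^sup>+x. f x * indicator A x \<partial>count_space B) = (\<integral>\<^sup>+x. f x * indicator A x * indicator B x \<partial>count_space UNIV)"
    by (subst nn_integral_count_space_indicator) auto
  also have "\<dots> = (\<integral>\<^sup>+x. f x * indicator A x \<partial>count_space UNIV)"
    using assms by (intro nn_integral_cong) (auto simp: indicator_def)
  finally show ?thesis by (simp add: nn_integral_count_space_indicator)
qed

lemma count_space_mono_set: assumes "A \<subseteq> B"
  shows "(\<integral>\<^sup>+x. f x \<partial>count_space A) \<le> (\<integral>\<^sup>+x. f x \<partial>count_space B)"
proof -
  have "(\<integral>\<^sup>+x. f x \<partial>count_space A) = (\<integral>\<^sup>+x. f x * indicator A x \<partial>count_space B)"
    using assms by (rule count_space_subset_ind)
  also have "\<dots> \<le> (\<integral>\<^sup>+x. f x \<partial>count_space B)"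
    by (intro nn_integral_mono) (auto simp: indicator_def)
  finally show ?thesis .
qed

locale bnd =
  fixes a :: "real^'n" and l :: real and g :: "(real^'n) set \<Rightarrow> ennreal" and B q :: real
  assumes l: "0 < l" and B: "0 < B" and gB: "\<And>Q. g Q \<le> ennreal B" and q: "1 \<le> q"
begin

definition lam :: "nat \<Rightarrow> real" where "lam i = 4 * B * (1/4)^i"
definition Om :: "nat \<Rightarrow> (real^'n) set" where "Om i = {x. \<exists>Q\<in>dyadic a l. x \<in> Q \<and> ennreal (lam i) < g Q}"
definition maxl :: "nat \<Rightarrow> (real^'n) set \<Rightarrow> bool" where
  "maxl i Q \<longleftrightarrow> Q \<in> dyadic a l \<and> ennreal (lam i) < g Q \<and> (\<forall>Q'\<in>dyadic a l. Q \<subseteq> Q' \<and> ennreal (lam i) < g Q' \<longrightarrow> Q' = Q)"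
definition SS :: "nat \<Rightarrow> (real^'n) set set" where "SS i = {Q. maxl i Q}"
definition good :: "nat \<Rightarrow> (real^'n) set \<Rightarrow> bool" where
  "good i Q \<longleftrightarrow> measure lebesgue (HQ Q \<inter> Om (i - 1)) \<le> measure lebesgue Q / 2"
definition Gd :: "nat \<Rightarrow> (real^'n) set set" where "Gd i = {Q\<in>SS i. good i Q}"

lemma lam_pos: "0 < lam i" using B by (simp add: lam_def)
lemma lam_Suc: "lam i = 4 * lam (Suc i)" by (simp add: lam_def)
lemma lam_mono: "i \<le> i' \<Longrightarrow> lam i' \<le> lam i"
  unfolding lam_def using B by (intro mult_left_mono power_decreasing) auto

lemma Om_Mb: "x \<in> Om i \<longleftrightarrow> ennreal (lam i) < Mb a l g x"
  unfolding Om_def Mb_def less_SUP_iff by auto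

lemma Mb_le_B: "Mb a l g x \<le> ennreal B"
  unfolding Mb_def by (rule SUP_least) (rule gB)

lemma Om0: "Om 0 = {}"
proof -
  have "\<not> ennreal (lam 0) < g Q" for Q
  proof -
    have "ennreal B \<le> ennreal (lam 0)" using B by (intro ennreal_leI) (simp add: lam_def)
    hence "g Q \<le> ennreal (lam 0)" using gB[of Q] by (rule order_trans[rotated])
    thus ?thesis by (simp add: not_less)
  qed
  thus ?thesis by (auto simp: Om_def)
qed

lemma Om_mono: assumes "i \<le> i'" shows "Om i \<subseteq> Om i'"
proof
  fix x assume "x \<in> Om i"
  then obtain Q where Q: "Q \<in> dyadic a l" "x \<in> Q" "ennreal (lam i) < g Q" by (auto simp: Om_def)
  have "ennreal (lam i') \<le> ennreal (lam i)" using lam_mono[OF assms] by (rule ennreal_leI)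
  hence "ennreal (lam i') < g Q" using Q(3) by (rule le_less_trans)
  thus "x \<in> Om i'" using Q by (auto simp: Om_def)
qed

lemma Om_sub: "Om i \<subseteq> cube a l"
  unfolding Om_def using dyadic_props(1)[OF l] by blast

lemma Om_sets[measurable]: "Om i \<in> sets lebesgue"
proof -
  have "Om i = \<Union>{Q\<in>dyadic a l. ennreal (lam i) < g Q}" unfolding Om_def by blast
  also have "\<dots> \<in> sets lebesgue"
    by (intro sets.countable_Union countable_subset[OF _ dyadic_countable[of a l]]) (auto intro: dyadic_props(2)[OF l])
  finally show ?thesis .
qed

lemma SS_D: "Q \<in> SS i \<Longrightarrow> Q \<in> dyadic a l" by (simp add: SS_def maxl_def)

lemma SS_countable: "countable (SS i)"
  using dyadic_countable by (rule countable_subset[rotated]) (auto dest: SS_D)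

lemma SS_Om: "Q \<in> SS i \<Longrightarrow> Q \<subseteq> Om i"
  by (auto simp: SS_def maxl_def Om_def)

lemma Om_SS: "Om i \<subseteq> \<Union>(SS i)"
proof
  fix x assume "x \<in> Om i"
  then obtain Q where Q: "Q \<in> dyadic a l" "x \<in> Q" "ennreal (lam i) < g Q" by (auto simp: Om_def)
  from exists_maximal[OF l Q(1), of "\<lambda>Q. ennreal (lam i) < g Q"] Q(3)
  obtain M where "M \<in> dyadic a l" "Q \<subseteq> M" "ennreal (lam i) < g M"
    "\<forall>Q'\<in>dyadic a l. M \<subseteq> Q' \<and> ennreal (lam i) < g Q' \<longrightarrow> Q' = M" by blast
  hence "M \<in> SS i" by (simp add: SS_def maxl_def)
  thus "x \<in> \<Union>(SS i)" using Q(2) \<open>Q \<subseteq> M\<close> by blast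
qed

lemma SS_disj: assumes "Q \<in> SS i" "Q' \<in> SS i" "Q \<noteq> Q'" shows "HQ Q \<inter> HQ Q' = {}"
proof (rule ccontr)
  assume "HQ Q \<inter> HQ Q' \<noteq> {}"
  then obtain x where "x \<in> HQ Q" "x \<in> HQ Q'" by blast
  hence "Q \<subseteq> Q' \<or> Q' \<subseteq> Q" using dyadic_HQ_nested[OF l SS_D[OF assms(1)] SS_D[OF assms(2)]] by blast
  thus False using assms by (auto simp: SS_def maxl_def)
qed

lemma mu_fin: assumes "Q \<in> dyadic a l" shows "emeasure lebesgue Q = ennreal (measure lebesgue Q)"
  using dyadic_props(7)[OF l assms] by (simp add: emeasure_eq_ennreal_measure)

lemma mu_HQ: assumes "Q \<in> dyadic a l" shows "measure lebesgue (HQ Q) = measure lebesgue Q"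
  using dyadic_props(5)[OF l assms] by (simp add: measure_def)

lemma mu_pos: assumes "Q \<in> dyadic a l" shows "0 < measure lebesgue Q"
  using dyadic_props(6,7)[OF l assms] by (simp add: measure_def enn2real_positive_iff)

lemma Om_le_sum: "emeasure lebesgue (Om i) \<le> (\<integral>\<^sup>+Q. emeasure lebesgue Q \<partial>count_space (SS i))"
proof -
  have [measurable]: "Q \<in> SS i \<Longrightarrow> Q \<in> sets lebesgue" for Q using dyadic_props(2)[OF l] SS_D by blast
  have "emeasure lebesgue (Om i) = (\<integral>\<^sup>+x. indicator (Om i) x \<partial>lebesgue)" by simp
  also have "\<dots> \<le> (\<integral>\<^sup>+x. (\<integral>\<^sup>+Q. indicator Q x \<partial>count_space (SS i)) \<partial>lebesgue)"
  proof (intro nn_integral_mono)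
    fix x
    show "indicator (Om i) x \<le> (\<integral>\<^sup>+Q. indicator Q x \<partial>count_space (SS i))"
    proof (cases "x \<in> Om i")
      case True
      then obtain Q where Q: "Q \<in> SS i" "x \<in> Q" using Om_SS by blast
      have "(1::ennreal) = (\<integral>\<^sup>+Q'. indicator {Q} Q' \<partial>count_space (SS i))"
        using Q by (simp add: nn_integral_indicator)
      also have "\<dots> \<le> (\<integral>\<^sup>+Q'. indicator Q' x \<partial>count_space (SS i))"
        using Q by (intro nn_integral_mono) (auto simp: indicator_def)
      finally show ?thesis using True by simp
    qed simp
  qed
  also have "\<dots> = (\<integral>\<^sup>+Q. (\<integral>\<^sup>+x. indicator Q x \<partial>lebesgue) \<partial>count_space (SS i))"
    by (rule nn_integral_count_space_nn_integral[OF SS_countable]) measurable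
  also have "\<dots> = (\<integral>\<^sup>+Q. emeasure lebesgue Q \<partial>count_space (SS i))"
    by (intro nn_integral_cong) (auto simp: dyadic_props(2)[OF l] dest: SS_D)
  finally show ?thesis .
qed

lemma bad_le: "(\<integral>\<^sup>+Q. emeasure lebesgue Q \<partial>count_space {Q\<in>SS i. \<not> good i Q}) \<le> 2 * emeasure lebesgue (Om (i - 1))"
proof -
  let ?I = "{Q\<in>SS i. \<not> good i Q}"
  let ?X = "\<lambda>Q. HQ Q \<inter> Om (i - 1)"
  have XS[measurable]: "Q \<in> ?I \<Longrightarrow> ?X Q \<in> sets lebesgue" for Q
    by (intro sets.Int dyadic_props(3)[OF l] Om_sets) (auto dest: SS_D)
  have "(\<integral>\<^sup>+Q. emeasure lebesgue Q \<partial>count_space ?I) \<le> (\<integral>\<^sup>+Q. 2 * emeasure lebesgue (?X Q) \<partial>count_space ?I)"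
  proof (intro nn_integral_mono)
    fix Q assume "Q \<in> space (count_space ?I)"
    hence Q: "Q \<in> SS i" "\<not> good i Q" by auto
    have QD: "Q \<in> dyadic a l" using SS_D[OF Q(1)] .
    have le: "emeasure lebesgue (?X Q) \<le> emeasure lebesgue Q"
      using dyadic_props(2,4)[OF l QD] by (intro emeasure_mono) auto
    have "emeasure lebesgue (?X Q) < \<infinity>" using le dyadic_props(7)[OF l QD] by (rule le_less_trans)
    hence fin: "emeasure lebesgue (?X Q) \<noteq> top" by simp
    have "measure lebesgue Q \<le> 2 * measure lebesgue (?X Q)" using Q(2) by (simp add: good_def)
    hence "ennreal (measure lebesgue Q) \<le> ennreal (2 * measure lebesgue (?X Q))" by (rule ennreal_leI)
    thus "emeasure lebesgue Q \<le> 2 * emeasure lebesgue (?X Q)"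
      using fin mu_fin[OF QD] by (simp add: emeasure_eq_ennreal_measure ennreal_mult)
  qed
  also have "\<dots> = 2 * (\<integral>\<^sup>+Q. emeasure lebesgue (?X Q) \<partial>count_space ?I)"
    by (simp add: nn_integral_cmult)
  also have "(\<integral>\<^sup>+Q. emeasure lebesgue (?X Q) \<partial>count_space ?I) = emeasure lebesgue (\<Union>(?X ` ?I))"
  proof (rule emeasure_UN_countable[symmetric])
    show "countable ?I" using SS_countable by (rule countable_subset[rotated]) auto
    show "disjoint_family_on ?X ?I"
      unfolding disjoint_family_on_def using SS_disj by blast
  qed (use XS in auto)
  also have "\<dots> \<le> emeasure lebesgue (Om (i - 1))" by (intro emeasure_mono) auto
  finally show ?thesis by (simp add: mult_left_mono)
qed

lemma Om_step: "emeasure lebesgue (Om i) \<le> (\<integral>\<^sup>+Q. emeasure lebesgue Q \<partial>count_space (Gd i)) + 2 * emeasure lebesgue (Om (i - 1))"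
proof -
  have "emeasure lebesgue (Om i) \<le> (\<integral>\<^sup>+Q. emeasure lebesgue Q \<partial>count_space (SS i))" by (rule Om_le_sum)
  also have "\<dots> = (\<integral>\<^sup>+Q. emeasure lebesgue Q \<partial>count_space (Gd i)) + (\<integral>\<^sup>+Q. emeasure lebesgue Q \<partial>count_space {Q\<in>SS i. \<not> good i Q})"
    unfolding Gd_def by (rule count_space_split)
  also have "\<dots> \<le> (\<integral>\<^sup>+Q. emeasure lebesgue Q \<partial>count_space (Gd i)) + 2 * emeasure lebesgue (Om (i - 1))"
    by (intro add_left_mono bad_le)
  finally show ?thesis .
qed

end

context bnd begin

lemma lam_powr_Suc: "lam i powr q = 4 powr q * lam (Suc i) powr q"
  using lam_pos[of "Suc i"] by (subst lam_Suc) (simp add: powr_mult)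

lemma lam_powr_geom: "lam i powr q = (4 * B) powr q * ((1/4) powr q) ^ i"
proof -
  have "lam i powr q = (4 * B) powr q * ((1/4)^i) powr q" unfolding lam_def using B by (simp add: powr_mult)
  also have "((1/4::real)^i) powr q = ((1/4) powr q) ^ i"
  proof -
    have "((1/4::real)^i) powr q = ((1/4) powr real i) powr q" by (simp add: powr_realpow)
    also have "\<dots> = ((1/4) powr q) powr real i" by (simp add: powr_powr mult.commute)
    also have "\<dots> = ((1/4) powr q) ^ i" by (simp add: powr_realpow)
    finally show ?thesis .
  qed
  finally show ?thesis .
qed

definition T where "T = (\<Sum>i. ennreal (lam i powr q) * emeasure lebesgue (Om i))"
definition Gs where "Gs i = (\<integral>\<^sup>+Q. emeasure lebesgue Q \<partial>count_space (Gd i))"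
definition Gsum where "Gsum = (\<Sum>i. ennreal (lam i powr q) * Gs i)"

lemma T_fin: "T \<noteq> top"
proof -
  define r where "r = (1/4::real) powr q"
  have r: "0 \<le> r" "r < 1" using q by (auto simp: r_def powr01_less_one)
  have sm: "summable (\<lambda>i. (4 * B) powr q * r ^ i)"
    using r by (intro summable_mult summable_geometric) auto
  have "(\<Sum>i. ennreal (lam i powr q)) = (\<Sum>i. ennreal ((4 * B) powr q * r ^ i))"
    by (simp add: lam_powr_geom r_def)
  also have "\<dots> \<noteq> top" using sm r by (intro ennreal_suminf_neq_top) auto
  finally have s: "(\<Sum>i. ennreal (lam i powr q)) \<noteq> top" .
  have "T \<le> (\<Sum>i. ennreal (lam i powr q) * emeasure lebesgue (cube a l))"
    unfolding T_def by (intro suminf_le mult_left_mono emeasure_mono Om_sub) (auto intro: summableI)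
  also have "\<dots> = (\<Sum>i. ennreal (lam i powr q)) * emeasure lebesgue (cube a l)"
    by (rule ennreal_suminf_multc)
  also have "\<dots> < top" using s emeasure_cube_fin[of a l] by (simp add: ennreal_mult_less_top top.not_eq_extremum)
  finally show ?thesis by simp
qed

lemma T_le: "T \<le> Gsum + ennreal (1/2) * T"
proof -
  define h where "h i = ennreal (lam i powr q) * (2 * emeasure lebesgue (Om (i - 1)))" for i
  have "T \<le> (\<Sum>i. ennreal (lam i powr q) * Gs i + h i)"
    unfolding T_def
  proof (rule suminf_le[OF _ summableI summableI])
    fix i
    show "ennreal (lam i powr q) * emeasure lebesgue (Om i) \<le> ennreal (lam i powr q) * Gs i + h i"
      unfolding h_def distrib_left[symmetric] by (intro mult_left_mono Om_step[folded Gs_def]) simp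
  qed
  also have "\<dots> = Gsum + suminf h" unfolding Gsum_def by (rule suminf_add[symmetric]) (auto intro: summableI)
  also have "suminf h = (\<Sum>j. h (Suc j))" by (rule ennreal_suminf_shift) (simp add: h_def Om0)
  also have "\<dots> \<le> (\<Sum>j. ennreal (1/2) * (ennreal (lam j powr q) * emeasure lebesgue (Om j)))"
  proof (intro suminf_le summableI)
    fix j
    have f4: "4 \<le> (4::real) powr q" using powr_mono[of 1 q 4] q by simp
    have x0: "0 \<le> lam (Suc j) powr q" by simp
    have "4 * lam (Suc j) powr q \<le> 4 powr q * lam (Suc j) powr q" using mult_right_mono[OF f4 x0] .
    hence r: "2 * lam (Suc j) powr q \<le> 1/2 * lam j powr q" using lam_powr_Suc[of j] by simp
    have "h (Suc j) = ennreal (2 * lam (Suc j) powr q) * emeasure lebesgue (Om j)"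
      by (simp add: h_def ennreal_mult mult_ac)
    also have "\<dots> \<le> ennreal (1/2 * lam j powr q) * emeasure lebesgue (Om j)"
      by (intro mult_right_mono ennreal_leI r) simp
    also have "\<dots> = ennreal (1/2) * (ennreal (lam j powr q) * emeasure lebesgue (Om j))"
    proof -
      have e: "ennreal (1/2 * lam j powr q) = ennreal (1/2) * ennreal (lam j powr q)" by (rule ennreal_mult) auto
      show ?thesis by (simp only: e mult.assoc)
    qed
    finally show "h (Suc j) \<le> ennreal (1/2) * (ennreal (lam j powr q) * emeasure lebesgue (Om j))" .
  qed
  also have "\<dots> = ennreal (1/2) * T" unfolding T_def by (rule ennreal_suminf_cmult)
  finally show ?thesis by (simp add: add_left_mono)
qed


lemma pointwise:
  "enn_powr (Mb a l g x) q * indicator (cube a l) x \<le> ennreal (4 powr q) * (\<Sum>i. ennreal (lam i powr q) * indicator (Om i) x)"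
proof -
  have mB: "Mb a l g x \<le> ennreal B" by (rule Mb_le_B)
  have "Mb a l g x \<noteq> top" using mB by (auto simp: top_unique)
  then obtain m where m1: "Mb a l g x = ennreal m" "0 \<le> m" by (cases "Mb a l g x") auto
  have m: "Mb a l g x = ennreal m" "0 \<le> m" "m \<le> B" using m1 mB B by (auto simp: ennreal_le_iff)
  have "enn_powr (Mb a l g x) q * indicator (cube a l) x \<le> enn_powr (Mb a l g x) q"
    by (auto simp: indicator_def)
  also have "\<dots> \<le> ennreal (4 powr q) * (\<Sum>i. ennreal (lam i powr q) * indicator (Om i) x)"
  proof (cases "m = 0")
    case True thus ?thesis using m by (simp add: enn_powr_ennreal)
  next
    case False
    hence mpos: "0 < m" using m by simp
    obtain n where n: "(1/4::real)^n < m / (4 * B)" using real_arch_pow_inv[of "m / (4*B)" "1/4"] mpos B by auto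
    have ex: "lam n < m" using n B by (simp add: lam_def field_simps)
    define i0 where "i0 = (LEAST i. lam i < m)"
    have i0: "lam i0 < m" unfolding i0_def using ex by (rule LeastI)
    have "i0 \<noteq> 0"
    proof
      assume "i0 = 0"
      hence "lam 0 < m" using i0 by simp
      thus False using m B by (simp add: lam_def)
    qed
    then obtain j where j: "i0 = Suc j" by (cases i0) auto
    have lj: "m \<le> lam j"
    proof (rule ccontr)
      assume "\<not> m \<le> lam j"
      hence "lam j < m" by simp
      hence "i0 \<le> j" unfolding i0_def by (rule Least_le)
      thus False using j by simp
    qed
    have xin: "x \<in> Om (Suc j)" unfolding Om_Mb m(1) using i0 j lam_pos[of "Suc j"] by (simp add: ennreal_less_iff)
    have "enn_powr (Mb a l g x) q = ennreal (m powr q)" using m by (simp add: enn_powr_ennreal)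
    also have "\<dots> \<le> ennreal (lam j powr q)" using m lj q by (intro ennreal_leI powr_mono2) auto
    also have "\<dots> = ennreal (4 powr q) * (ennreal (lam (Suc j) powr q) * indicator (Om (Suc j)) x)"
      using xin by (simp add: lam_powr_Suc[of j] ennreal_mult)
    also have "\<dots> \<le> ennreal (4 powr q) * (\<Sum>i. ennreal (lam i powr q) * indicator (Om i) x)"
      by (intro mult_left_mono ennreal_le_suminf[of "\<lambda>i. ennreal (lam i powr q) * indicator (Om i) x"]) simp
    finally show ?thesis .
  qed
  finally show ?thesis .
qed

lemma int_le_T: "(\<integral>\<^sup>+x\<in>cube a l. enn_powr (Mb a l g x) q \<partial>lebesgue) \<le> ennreal (4 powr q) * T"
proof -
  have "(\<integral>\<^sup>+x\<in>cube a l. enn_powr (Mb a l g x) q \<partial>lebesgue)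
      \<le> (\<integral>\<^sup>+x. ennreal (4 powr q) * (\<Sum>i. ennreal (lam i powr q) * indicator (Om i) x) \<partial>lebesgue)"
    by (intro nn_integral_mono pointwise)
  also have "\<dots> = ennreal (4 powr q) * (\<integral>\<^sup>+x. (\<Sum>i. ennreal (lam i powr q) * indicator (Om i) x) \<partial>lebesgue)"
    by (rule nn_integral_cmult) measurable
  also have "(\<integral>\<^sup>+x. (\<Sum>i. ennreal (lam i powr q) * indicator (Om i) x) \<partial>lebesgue)
      = (\<Sum>i. (\<integral>\<^sup>+x. ennreal (lam i powr q) * indicator (Om i) x \<partial>lebesgue))"
    by (rule nn_integral_suminf) measurable
  also have "\<dots> = T" unfolding T_def by (simp add: nn_integral_cmult_indicator)
  finally show ?thesis .
qed

lemma unique_lt: assumes "Q \<in> Gd i" "Q \<in> Gd i'" "i < i'" shows False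
proof -
  have Q: "Q \<in> SS i" "Q \<in> SS i'" "good i' Q" using assms by (auto simp: Gd_def)
  have QD: "Q \<in> dyadic a l" by (rule SS_D[OF Q(1)])
  have ii: "i \<le> i' - 1" using assms(3) by simp
  have "Q \<subseteq> Om (i' - 1)" using SS_Om[OF Q(1)] Om_mono[OF ii] by auto
  hence "HQ Q \<inter> Om (i' - 1) = HQ Q" using dyadic_props(4)[OF l QD] by blast
  hence "measure lebesgue Q \<le> measure lebesgue Q / 2" using Q(3) mu_HQ[OF QD] by (simp add: good_def)
  thus False using mu_pos[OF QD] by simp
qed

lemma unique_idx: "Q \<in> Gd i \<Longrightarrow> Q \<in> Gd i' \<Longrightarrow> i = i'"
  using unique_lt by (metis linorder_neqE_nat)

definition FF where "FF = {Q. \<exists>i. Q \<in> Gd i}"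
definition idx where "idx Q = (THE i. Q \<in> Gd i)"
definition EE where "EE Q = HQ Q - Om (idx Q - 1)"

lemma idx: "Q \<in> Gd i \<Longrightarrow> idx Q = i"
  unfolding idx_def using unique_idx by blast

lemma Gd_SS: "Q \<in> Gd i \<Longrightarrow> Q \<in> SS i" by (simp add: Gd_def)

lemma FF_sparse: "FF \<in> sparse a l"
proof -
  have FD: "FF \<subseteq> dyadic a l" by (auto simp: FF_def dest: Gd_SS SS_D)
  have cF: "countable FF" using dyadic_countable FD by (rule countable_subset[rotated])
  have E1: "EE Q \<in> sets lebesgue \<and> EE Q \<subseteq> Q \<and> measure lebesgue (EE Q) \<ge> measure lebesgue Q / 2" if Q: "Q \<in> FF" for Q
  proof -
    obtain i where i: "Q \<in> Gd i" using Q by (auto simp: FF_def)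
    have QD: "Q \<in> dyadic a l" using SS_D[OF Gd_SS[OF i]] .
    have e: "EE Q = HQ Q - (HQ Q \<inter> Om (i - 1))" by (auto simp: EE_def idx[OF i])
    have sets: "EE Q \<in> sets lebesgue" unfolding e using dyadic_props(3)[OF l QD] Om_sets by auto
    have sub: "EE Q \<subseteq> Q" unfolding e using dyadic_props(4)[OF l QD] by auto
    have "measure lebesgue (EE Q) = measure lebesgue (HQ Q) - measure lebesgue (HQ Q \<inter> Om (i - 1))"
      unfolding e using dyadic_props(3,5,7)[OF l QD] Om_sets
      by (intro measure_Diff) (auto simp: top.not_eq_extremum)
    also have "\<dots> \<ge> measure lebesgue Q / 2" using i mu_HQ[OF QD] by (simp add: Gd_def good_def)
    finally show ?thesis using sets sub by simp
  qed
  have E2: "EE Q \<inter> EE Q' = {}" if Q: "Q \<in> FF" "Q' \<in> FF" "Q \<noteq> Q'" for Q Q'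
  proof -
    obtain i where i: "Q \<in> Gd i" using Q by (auto simp: FF_def)
    obtain i' where i': "Q' \<in> Gd i'" using Q by (auto simp: FF_def)
    have lt: "EE P \<inter> EE P' = {}" if P: "P \<in> Gd k" "P' \<in> Gd k'" "k < k'" for P P' k k'
    proof -
      have kk: "k \<le> k' - 1" using P(3) by simp
      have "EE P \<subseteq> Om (k' - 1)"
        using dyadic_props(4)[OF l SS_D[OF Gd_SS[OF P(1)]]] SS_Om[OF Gd_SS[OF P(1)]] Om_mono[OF kk]
        by (auto simp: EE_def)
      thus ?thesis by (auto simp: EE_def idx[OF P(2)])
    qed
    consider "i = i'" | "i < i'" | "i' < i" by linarith
    thus ?thesis
    proof cases
      case 1
      hence "HQ Q \<inter> HQ Q' = {}" using SS_disj[OF Gd_SS[OF i] Gd_SS[OF i'[folded 1]]] Q(3) by simp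
      thus ?thesis by (auto simp: EE_def)
    next
      case 2 thus ?thesis using lt[OF i i'] by simp
    next
      case 3 thus ?thesis using lt[OF i' i] by blast
    qed
  qed
  show ?thesis unfolding sparse_def
    using FD cF E1 E2 by (intro CollectI conjI exI[of _ EE]) auto
qed

lemma Gsum_le: "Gsum \<le> (\<integral>\<^sup>+Q. enn_powr (g Q) q * emeasure lebesgue Q \<partial>count_space FF)"
proof -
  have "Gsum = (\<Sum>i. (\<integral>\<^sup>+Q. ennreal (lam i powr q) * (emeasure lebesgue Q * indicator (Gd i) Q) \<partial>count_space FF))"
    unfolding Gsum_def Gs_def
  proof (intro suminf_cong)
    fix i
    have "Gd i \<subseteq> FF" by (auto simp: FF_def)
    hence "(\<integral>\<^sup>+Q. emeasure lebesgue Q \<partial>count_space (Gd i)) = (\<integral>\<^sup>+Q. emeasure lebesgue Q * indicator (Gd i) Q \<partial>count_space FF)"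
      by (rule count_space_subset_ind)
    thus "ennreal (lam i powr q) * (\<integral>\<^sup>+Q. emeasure lebesgue Q \<partial>count_space (Gd i))
        = (\<integral>\<^sup>+Q. ennreal (lam i powr q) * (emeasure lebesgue Q * indicator (Gd i) Q) \<partial>count_space FF)"
      by (simp add: nn_integral_cmult)
  qed
  also have "\<dots> = (\<integral>\<^sup>+Q. (\<Sum>i. ennreal (lam i powr q) * (emeasure lebesgue Q * indicator (Gd i) Q)) \<partial>count_space FF)"
    by (rule nn_integral_suminf[symmetric]) simp
  also have "\<dots> \<le> (\<integral>\<^sup>+Q. enn_powr (g Q) q * emeasure lebesgue Q \<partial>count_space FF)"
  proof (intro nn_integral_mono)
    fix Q assume "Q \<in> space (count_space FF)"
    then obtain i0 where i0: "Q \<in> Gd i0" by (auto simp: FF_def)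
    have "(\<Sum>i. ennreal (lam i powr q) * (emeasure lebesgue Q * indicator (Gd i) Q))
        = (\<Sum>i\<in>{i0}. ennreal (lam i powr q) * (emeasure lebesgue Q * indicator (Gd i) Q))"
      by (rule suminf_finite) (auto simp: indicator_def dest: unique_idx[OF i0])
    also have "\<dots> = ennreal (lam i0 powr q) * emeasure lebesgue Q" using i0 by simp
    also have "\<dots> \<le> enn_powr (g Q) q * emeasure lebesgue Q"
    proof (intro mult_right_mono)
      have "ennreal (lam i0) < g Q" using Gd_SS[OF i0] by (simp add: SS_def maxl_def)
      hence "enn_powr (ennreal (lam i0)) q \<le> enn_powr (g Q) q" using q by (intro enn_powr_mono) auto
      thus "ennreal (lam i0 powr q) \<le> enn_powr (g Q) q" using lam_pos[of i0] by (simp add: enn_powr_ennreal)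
    qed simp
    finally show "(\<Sum>i. ennreal (lam i powr q) * (emeasure lebesgue Q * indicator (Gd i) Q))
        \<le> enn_powr (g Q) q * emeasure lebesgue Q" .
  qed
  finally show ?thesis .
qed

lemma bounded_main:
  "(\<integral>\<^sup>+x\<in>cube a l. enn_powr (Mb a l g x) q \<partial>lebesgue)
     \<le> ennreal (2 * 4 powr q) * (SUP S\<in>sparse a l. \<integral>\<^sup>+Q. enn_powr (g Q) q * emeasure lebesgue Q \<partial>count_space S)"
proof -
  let ?P = "(SUP S\<in>sparse a l. \<integral>\<^sup>+Q. enn_powr (g Q) q * emeasure lebesgue Q \<partial>count_space S)"
  have "T \<le> 2 * Gsum" using T_fin T_le by (rule ennreal_half_absorb)
  also have "\<dots> \<le> 2 * ?P"
    using Gsum_le SUP_upper[OF FF_sparse, of "\<lambda>S. \<integral>\<^sup>+Q. enn_powr (g Q) q * emeasure lebesgue Q \<partial>count_space S"]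
    by (intro mult_left_mono) auto
  finally have "T \<le> 2 * ?P" .
  hence "ennreal (4 powr q) * T \<le> ennreal (4 powr q) * (2 * ?P)" by (rule mult_left_mono) simp
  also have "\<dots> = ennreal (2 * 4 powr q) * ?P" by (simp add: ennreal_mult mult_ac)
  finally show ?thesis using int_le_T by (rule order_trans[rotated])
qed

end

lemma SUP_min_const: "(SUP i\<in>A. min (f i) (c::ennreal)) = min (SUP i\<in>A. f i) c"
proof (rule antisym)
  show "(SUP i\<in>A. min (f i) c) \<le> min (SUP i\<in>A. f i) c"
    by (rule SUP_least) (erule min.mono[OF SUP_upper order.refl])
  show "min (SUP i\<in>A. f i) c \<le> (SUP i\<in>A. min (f i) c)"
  proof (cases "(SUP i\<in>A. f i) \<le> c")
    case True
    hence "(SUP i\<in>A. f i) \<le> (SUP i\<in>A. min (f i) c)"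
      by (intro SUP_mono) (auto intro: order_trans[OF SUP_upper])
    thus ?thesis by (simp add: min.coboundedI1)
  next
    case False
    then obtain i where i: "i \<in> A" "c < f i" by (auto simp: not_le less_SUP_iff)
    hence "c \<le> (SUP i\<in>A. min (f i) c)" by (intro SUP_upper2[OF i(1)]) simp
    thus ?thesis by (simp add: min.coboundedI2)
  qed
qed

lemma Mb_min: "Mb a l (\<lambda>Q. min (g Q) c) x = min (Mb a l g x) c"
  unfolding Mb_def by (rule SUP_min_const)

lemma sup_trunc: assumes q: "1 \<le> q"
  shows "(SUP N. enn_powr (min y (ennreal (real N + 1))) q) = enn_powr y q"
proof (rule antisym)
  show "(SUP N. enn_powr (min y (ennreal (real N + 1))) q) \<le> enn_powr y q"
    using q by (intro SUP_least enn_powr_mono) auto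
  show "enn_powr y q \<le> (SUP N. enn_powr (min y (ennreal (real N + 1))) q)"
  proof (cases "y = top")
    case True
    have "top = (SUP N. (of_nat N :: ennreal))" by (simp add: ennreal_SUP_of_nat_eq_top)
    also have "\<dots> \<le> (SUP N. enn_powr (min y (ennreal (real N + 1))) q)"
    proof (intro SUP_mono bexI)
      fix N :: nat
      have r: "real N + 1 \<le> (real N + 1) powr q" using powr_mono[of 1 q "real N + 1"] q by simp
      have e: "min y (ennreal (real N + 1)) = ennreal (real N + 1)" unfolding True by (rule min.absorb2[OF top_greatest])
      have "enn_powr (min y (ennreal (real N + 1))) q = ennreal ((real N + 1) powr q)"
        unfolding e by (rule enn_powr_ennreal) simp
      moreover have "(of_nat N :: ennreal) \<le> ennreal ((real N + 1) powr q)"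
        using r by (subst ennreal_of_nat_eq_real_of_nat) (rule ennreal_leI, linarith)
      ultimately show "of_nat N \<le> enn_powr (min y (ennreal (real N + 1))) q" by simp
    qed simp
    finally show ?thesis using True by simp
  next
    case False
    then obtain m where m: "y = ennreal m" "0 \<le> m" by (cases y) auto
    define N where "N = nat \<lceil>m\<rceil>"
    have "m \<le> real N + 1" unfolding N_def by linarith
    hence "y \<le> ennreal (real N + 1)" unfolding m(1) by (rule ennreal_leI)
    hence "min y (ennreal (real N + 1)) = y" by (rule min.absorb1)
    thus ?thesis by (intro SUP_upper2[of N]) simp_all
  qed
qed

lemma dirB:
  fixes a :: "real^'n"
  assumes l: "0 < l" and q: "1 \<le> q"
  shows "(\<integral>\<^sup>+x\<in>cube a l. enn_powr (Mb a l g x) q \<partial>lebesgue)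
     \<le> ennreal (2 * 4 powr q) * (SUP S\<in>sparse a l. \<integral>\<^sup>+Q. enn_powr (g Q) q * emeasure lebesgue Q \<partial>count_space S)"
proof -
  let ?P = "(SUP S\<in>sparse a l. \<integral>\<^sup>+Q. enn_powr (g Q) q * emeasure lebesgue Q \<partial>count_space S)"
  define f where "f N x = enn_powr (min (Mb a l g x) (ennreal (real N + 1))) q * indicator (cube a l) x" for N x
  have fm: "f N \<in> borel_measurable lebesgue" for N unfolding f_def using Mb_meas[OF l] by measurable
  have inc: "incseq f"
  proof (intro incseq_SucI le_funI)
    fix N x show "f N x \<le> f (Suc N) x"
      unfolding f_def using q by (intro mult_right_mono enn_powr_mono min.mono ennreal_leI) auto
  qed
  have eq: "(SUP N. f N x) = enn_powr (Mb a l g x) q * indicator (cube a l) x" for x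
    unfolding f_def using sup_trunc[OF q] by (cases "x \<in> cube a l") auto
  have bnd_N: "(\<integral>\<^sup>+x. f N x \<partial>lebesgue) \<le> ennreal (2 * 4 powr q) * ?P" for N
  proof -
    interpret bnd a l "\<lambda>Q. min (g Q) (ennreal (real N + 1))" "real N + 1" q
      using l q by unfold_locales auto
    have "(\<integral>\<^sup>+x. f N x \<partial>lebesgue) = (\<integral>\<^sup>+x\<in>cube a l. enn_powr (Mb a l (\<lambda>Q. min (g Q) (ennreal (real N + 1))) x) q \<partial>lebesgue)"
      unfolding f_def Mb_min ..
    also have "\<dots> \<le> ennreal (2 * 4 powr q) * (SUP S\<in>sparse a l. \<integral>\<^sup>+Q. enn_powr (min (g Q) (ennreal (real N + 1))) q * emeasure lebesgue Q \<partial>count_space S)"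
      by (rule bounded_main)
    also have "\<dots> \<le> ennreal (2 * 4 powr q) * ?P"
      using q by (intro mult_left_mono SUP_mono' nn_integral_mono mult_right_mono enn_powr_mono) auto
    finally show ?thesis .
  qed
  have "(\<integral>\<^sup>+x\<in>cube a l. enn_powr (Mb a l g x) q \<partial>lebesgue) = (\<integral>\<^sup>+x. (SUP N. f N x) \<partial>lebesgue)"
    by (simp add: eq)
  also have "\<dots> = (SUP N. \<integral>\<^sup>+x. f N x \<partial>lebesgue)"
    by (rule nn_integral_monotone_convergence_SUP[OF inc fm])
  also have "\<dots> \<le> ennreal (2 * 4 powr q) * ?P" by (rule SUP_least) (rule bnd_N)
  finally show ?thesis .
qed

lemma logw_pos: "0 < logw \<alpha> Q"
proof -
  have "1 \<le> 1 - min (ln (measure lebesgue Q)) 0" by simp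
  thus ?thesis unfolding logw_def by simp
qed

lemma SR_term:
  fixes a :: "real^'n"
  assumes l: "0 < l" and Q: "Q \<in> dyadic a l" and q: "0 < q"
  shows "enn_powr (ennreal (logw \<alpha> Q * measure lebesgue Q powr (1/p - 1)) * I) q
       = enn_powr (ennreal (measure lebesgue Q powr (real CARD('n) * (1/p - 1/q) / real CARD('n) - 1) * logw \<alpha> Q) * I) q * emeasure lebesgue Q"
proof -
  define \<mu> where "\<mu> = measure lebesgue Q"
  define w where "w = logw \<alpha> Q"
  have fin: "emeasure lebesgue Q \<noteq> top" using dyadic_props(7)[OF l Q] by simp
  have em: "emeasure lebesgue Q = ennreal \<mu>" unfolding \<mu>_def using fin by (simp add: emeasure_eq_ennreal_measure)
  have mu: "0 < \<mu>" using dyadic_props(6)[OF l Q] em by simp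
  have w: "0 < w" unfolding w_def by (rule logw_pos)
  have cn: "real CARD('n) \<noteq> 0" by simp
  have ex: "real CARD('n) * (1/p - 1/q) / real CARD('n) - 1 = -1/q + (1/p - 1)" using cn by (simp add: field_simps)
  have e1: "\<mu> powr (real CARD('n) * (1/p - 1/q) / real CARD('n) - 1) * w = \<mu> powr (-1/q) * (w * \<mu> powr (1/p - 1))"
    unfolding ex powr_add by (simp add: mult_ac)
  have "ennreal (\<mu> powr (real CARD('n) * (1/p - 1/q) / real CARD('n) - 1) * w) * I
      = ennreal (\<mu> powr (-1/q)) * (ennreal (w * \<mu> powr (1/p - 1)) * I)"
    unfolding e1 using w mu by (simp add: ennreal_mult mult.assoc)
  hence "enn_powr (ennreal (\<mu> powr (real CARD('n) * (1/p - 1/q) / real CARD('n) - 1) * w) * I) q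
      = ennreal ((\<mu> powr (-1/q)) powr q) * enn_powr (ennreal (w * \<mu> powr (1/p - 1)) * I) q"
    using mu by (simp add: enn_powr_cmult)
  also have "(\<mu> powr (-1/q)) powr q = 1 / \<mu>"
  proof -
    have "(\<mu> powr (-1/q)) powr q = \<mu> powr (-1/q * q)" by (rule powr_powr)
    also have "-1/q * q = -1" using q by simp
    also have "\<mu> powr (-1) = 1 / \<mu>" using mu by (simp add: powr_minus_divide)
    finally show ?thesis .
  qed
  finally have "enn_powr (ennreal (\<mu> powr (real CARD('n) * (1/p - 1/q) / real CARD('n) - 1) * w) * I) q * ennreal \<mu>
      = enn_powr (ennreal (w * \<mu> powr (1/p - 1)) * I) q * (ennreal (1/\<mu>) * ennreal \<mu>)"
    by (simp add: mult_ac)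
  also have "ennreal (1/\<mu>) * ennreal \<mu> = 1" using mu by (simp flip: ennreal_mult)
  finally show ?thesis unfolding em \<mu>_def w_def by simp
qed

lemma powr_inv_le2: assumes "1 \<le> q" shows "(2::real) powr (1/q) \<le> 2"
  using powr_mono[of "1/q" 1 2] assms by simp

lemma norms:
  fixes a :: "real^'n" and f :: "real^'n \<Rightarrow> real"
  assumes p: "1 \<le> p" "p \<le> q" and l: "0 < l"
  shows "SR_norm p q \<alpha> a l f \<le> ennreal 8 * M_Lq_norm (real CARD('n) * (1/p - 1/q)) \<alpha> q a l f"
    and "M_Lq_norm (real CARD('n) * (1/p - 1/q)) \<alpha> q a l f \<le> ennreal 8 * SR_norm p q \<alpha> a l f"
proof -
  have q1: "1 \<le> q" and q0: "0 < q" using p by auto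
  define g where "g Q = ennreal (measure lebesgue Q powr (real CARD('n) * (1/p - 1/q) / real CARD('n) - 1) * logw \<alpha> Q) * (\<integral>\<^sup>+y\<in>Q. ennreal \<bar>f y\<bar> \<partial>lebesgue)" for Q
  define P where "P = (SUP S\<in>sparse a l. \<integral>\<^sup>+Q. enn_powr (g Q) q * emeasure lebesgue Q \<partial>count_space S)"
  define I where "I = (\<integral>\<^sup>+x\<in>cube a l. enn_powr (Mb a l g x) q \<partial>lebesgue)"
  have SR: "SR_norm p q \<alpha> a l f = enn_powr P (1/q)"
    unfolding SR_norm_def P_def
  proof (intro arg_cong[where f="\<lambda>x. enn_powr x (1/q)"] SUP_cong refl nn_integral_cong)
    fix S Q assume S: "S \<in> sparse a l" and "Q \<in> space (count_space S)"
    hence QD: "Q \<in> dyadic a l" by (auto simp: sparse_def)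
    show "enn_powr (ennreal (logw \<alpha> Q * measure lebesgue Q powr (1/p - 1)) * (\<integral>\<^sup>+x\<in>Q. ennreal \<bar>f x\<bar> \<partial>lebesgue)) q
        = enn_powr (g Q) q * emeasure lebesgue Q"
      unfolding g_def by (rule SR_term[OF l QD q0])
  qed
  have MLn: "M_Lq_norm (real CARD('n) * (1/p - 1/q)) \<alpha> q a l f = enn_powr I (1/q)"
    unfolding M_Lq_norm_def I_def Mmax_Mb g_def ..
  have A: "P \<le> 2 * I" unfolding P_def I_def by (rule SUP_least) (rule dirA[OF l q0])
  have B: "I \<le> ennreal (2 * 4 powr q) * P" unfolding P_def I_def by (rule dirB[OF l q1])
  have "SR_norm p q \<alpha> a l f \<le> enn_powr (ennreal 2 * I) (1/q)"
    unfolding SR using A q0 by (intro enn_powr_mono) auto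
  also have "\<dots> = ennreal (2 powr (1/q)) * enn_powr I (1/q)" by (rule enn_powr_cmult) simp
  also have "\<dots> \<le> ennreal 8 * enn_powr I (1/q)"
    using powr_inv_le2[OF q1] by (intro mult_right_mono ennreal_leI) auto
  finally show "SR_norm p q \<alpha> a l f \<le> ennreal 8 * M_Lq_norm (real CARD('n) * (1/p - 1/q)) \<alpha> q a l f"
    unfolding MLn .
  have "M_Lq_norm (real CARD('n) * (1/p - 1/q)) \<alpha> q a l f \<le> enn_powr (ennreal (2 * 4 powr q) * P) (1/q)"
    unfolding MLn using B q0 by (intro enn_powr_mono) auto
  also have "\<dots> = ennreal ((2 * 4 powr q) powr (1/q)) * enn_powr P (1/q)" by (rule enn_powr_cmult) simp
  also have "(2 * 4 powr q) powr (1/q) = 2 powr (1/q) * 4"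
    using q0 by (simp add: powr_mult powr_powr)
  also have "ennreal (2 powr (1/q) * 4) \<le> ennreal 8"
    using powr_inv_le2[OF q1] by (intro ennreal_leI) auto
  finally show "M_Lq_norm (real CARD('n) * (1/p - 1/q)) \<alpha> q a l f \<le> ennreal 8 * SR_norm p q \<alpha> a l f"
    unfolding SR by (simp add: mult_right_mono)
qed

lemma Mmax_meas: assumes "0 < l" shows "Mmax lam \<alpha> a l f \<in> borel_measurable (lebesgue_on (cube a l))"
  unfolding Mmax_Mb by (rule measurable_restrict_space1) (rule Mb_meas[OF assms])

theorem theorem3p1:
  fixes p q \<alpha> :: real
  assumes "1 \<le> p" and "p \<le> q" and "p = q \<Longrightarrow> \<alpha> \<le> 0"
  shows "\<exists>C::real. C > 0 \<and>
    (\<forall>(a::real^'n) l. l > 0 \<longrightarrow>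
       SR_space p q \<alpha> a l = M_Lq_space (real CARD('n) * (1/p - 1/q)) \<alpha> q a l \<and>
       (\<forall>f. set_integrable lebesgue (cube a l) f \<longrightarrow>
          SR_norm p q \<alpha> a l f \<le> ennreal C * M_Lq_norm (real CARD('n) * (1/p - 1/q)) \<alpha> q a l f \<and>
          M_Lq_norm (real CARD('n) * (1/p - 1/q)) \<alpha> q a l f \<le> ennreal C * SR_norm p q \<alpha> a l f))"
proof (intro exI[of _ 8] conjI allI impI)
  fix a :: "real^'n" and l :: real and f
  assume l: "l > 0"
  note N = norms[OF assms(1,2) l]
  show "SR_norm p q \<alpha> a l f \<le> ennreal 8 * M_Lq_norm (real CARD('n) * (1/p - 1/q)) \<alpha> q a l f" by (rule N(1))
  show "M_Lq_norm (real CARD('n) * (1/p - 1/q)) \<alpha> q a l f \<le> ennreal 8 * SR_norm p q \<alpha> a l f" by (rule N(2))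
next
  fix a :: "real^'n" and l :: real
  assume l: "l > 0"
  show "SR_space p q \<alpha> a l = M_Lq_space (real CARD('n) * (1/p - 1/q)) \<alpha> q a l"
  proof (intro set_eqI iffI)
    fix f assume "f \<in> SR_space p q \<alpha> a l"
    hence f: "set_integrable lebesgue (cube a l) f" "SR_norm p q \<alpha> a l f < \<infinity>" by (auto simp: SR_space_def)
    have "M_Lq_norm (real CARD('n) * (1/p - 1/q)) \<alpha> q a l f \<le> ennreal 8 * SR_norm p q \<alpha> a l f"
      by (rule norms(2)[OF assms(1,2) l])
    also have "\<dots> < \<infinity>" using f(2) by (simp add: ennreal_mult_less_top)
    finally show "f \<in> M_Lq_space (real CARD('n) * (1/p - 1/q)) \<alpha> q a l"
      using f(1) Mmax_meas[OF l] by (simp add: M_Lq_space_def)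
  next
    fix f assume "f \<in> M_Lq_space (real CARD('n) * (1/p - 1/q)) \<alpha> q a l"
    hence f: "set_integrable lebesgue (cube a l) f" "M_Lq_norm (real CARD('n) * (1/p - 1/q)) \<alpha> q a l f < \<infinity>"
      by (auto simp: M_Lq_space_def)
    have "SR_norm p q \<alpha> a l f \<le> ennreal 8 * M_Lq_norm (real CARD('n) * (1/p - 1/q)) \<alpha> q a l f"
      by (rule norms(1)[OF assms(1,2) l])
    also have "\<dots> < \<infinity>" using f(2) by (simp add: ennreal_mult_less_top)
    finally show "f \<in> SR_space p q \<alpha> a l" using f(1) by (simp add: SR_space_def)
  qed
qed simp

end
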